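(* For every $1\le k\le 22$ and every $n\ge3$, the Lie algebra $\mathfrak a_k(n)$ has trivial center.
   Context: Pauli matrices $I,X,Y,Z$; for two-qubit strings $AB$, $A_jB_{j+1}$ denotes the length-$n$ Pauli string with $A$ at position $j$, $B$ at position $j+1$, $I$ elsewhere. For a set $S$ of Pauli strings, $\mathrm{Lie}\langle S\rangle$ is the smallest real Lie subalgebra of $\mathfrak u(2^n)$ containing $\{iP:P\in S\}$. For a set $G$ of two-qubit strings, $G(n)=\mathrm{Lie}\langle A_jB_{j+1}: AB\in G, 1\le j\le n-1\rangle$. Generating sets: $\mathfrak a_1=\{XY\}$, $\mathfrak a_2=\{XY,YX\}$, $\mathfrak a_3=\{XX,YZ\}$, $\mathfrak a_4=\{XX,YY\}$, $\mathfrak a_5=\{XY,YZ\}$, $\mathfrak a_6=\{XX,YZ,ZY\}$, $\mathfrak a_7=\{XX,YY,ZZ\}$, $\mathfrak a_8=\{XX,XZ\}$, $\mathfrak a_9=\{XY,XZ\}$, $\mathfrak a_{10}=\{XY,YZ,ZX\}$, $\mathfrak a_{11}=\{XY,YX,YZ\}$, $\mathfrak a_{12}=\{XX,XY,YZ\}$, $\mathfrak a_{13}=\{XX,YY,YZ\}$, $\mathfrak a_{14}=\{XX,YY,XY\}$, $\mathfrak a_{15}=\{XX,XY,XZ\}$, $\mathfrak a_{16}=\{XY,YX,YZ,ZY\}$, $\mathfrak a_{17}=\{XX,XY,ZX\}$, $\mathfrak a_{18}=\{XX,XZ,YY,ZY\}$, $\mathfrak a_{19}=\{XX,XY,ZX,YZ\}$,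 $\mathfrak a_{20}=\{XX,YY,ZZ,ZY\}$, $\mathfrak a_{21}=\{XX,YY,XY,ZX\}$, $\mathfrak a_{22}=\{XX,XY,XZ,YX\}$. *)

theory Defs
  imports "Jordan_Normal_Form.Matrix"
begin

datatype pauli = PI | PX | PY | PZ

text \<open>Entry (r,c) of the 2x2 Pauli matrix, basis state False = |0>, True = |1>.\<close>
fun pauli_entry :: "pauli \<Rightarrow> bool \<Rightarrow> bool \<Rightarrow> complex" where
  "pauli_entry PI r c = (if r = c then 1 else 0)"
| "pauli_entry PX r c = (if r \<noteq> c then 1 else 0)"
| "pauli_entry PY r c = (if r = c then 0 else if r then \<i> else - \<i>)"
| "pauli_entry PZ r c = (if r = c then (if r then -1 else 1) else 0)"

definition bit_of :: "nat \<Rightarrow> nat \<Rightarrow> bool" where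
  "bit_of x j = odd (x div 2 ^ j)"

text \<open>Tensor product of the Pauli matrices in the word w (qubit j uses bit j of the index).\<close>
definition pauli_mat :: "pauli list \<Rightarrow> complex mat" where
  "pauli_mat w = mat (2 ^ length w) (2 ^ length w)
     (\<lambda>(r, c). \<Prod>j<length w. pauli_entry (w ! j) (bit_of r j) (bit_of c j))"

text \<open>The length-n string A_j B_{j+1} (positions 1-indexed, 1 <= j <= n-1).\<close>
definition two_site :: "nat \<Rightarrow> nat \<Rightarrow> pauli \<Rightarrow> pauli \<Rightarrow> pauli list" where
  "two_site n j A B = replicate (j - 1) PI @ [A, B] @ replicate (n - j - 1) PI"

inductive_set lie_closure :: "nat \<Rightarrow> complex mat set \<Rightarrow> complex mat set"
  for N :: nat and S :: "complex mat set" where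
  gen: "x \<in> S \<Longrightarrow> x \<in> lie_closure N S"
| zero: "0\<^sub>m N N \<in> lie_closure N S"
| add: "x \<in> lie_closure N S \<Longrightarrow> y \<in> lie_closure N S \<Longrightarrow> x + y \<in> lie_closure N S"
| smult: "x \<in> lie_closure N S \<Longrightarrow> complex_of_real r \<cdot>\<^sub>m x \<in> lie_closure N S"
| bracket: "x \<in> lie_closure N S \<Longrightarrow> y \<in> lie_closure N S \<Longrightarrow> x * y - y * x \<in> lie_closure N S"

definition Lie_gen :: "nat \<Rightarrow> pauli list set \<Rightarrow> complex mat set" where
  "Lie_gen n S = lie_closure (2 ^ n) ((\<lambda>P. \<i> \<cdot>\<^sub>m pauli_mat P) ` S)"

definition G_alg :: "(pauli \<times> pauli) set \<Rightarrow> nat \<Rightarrow> complex mat set" where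
  "G_alg G n = Lie_gen n {two_site n j A B | j A B. (A, B) \<in> G \<and> 1 \<le> j \<and> j \<le> n - 1}"

definition lie_center :: "complex mat set \<Rightarrow> complex mat set" where
  "lie_center L = {x \<in> L. \<forall>y \<in> L. x * y - y * x = 0\<^sub>m (dim_row x) (dim_col x)}"

text \<open>a_k = gens k for 1 <= k <= 22 (entry k-1 of the list).\<close>
definition gens_list :: "(pauli \<times> pauli) set list" where
  "gens_list = [
    {(PX,PY)},
    {(PX,PY),(PY,PX)},
    {(PX,PX),(PY,PZ)},
    {(PX,PX),(PY,PY)},
    {(PX,PY),(PY,PZ)},
    {(PX,PX),(PY,PZ),(PZ,PY)},
    {(PX,PX),(PY,PY),(PZ,PZ)},
    {(PX,PX),(PX,PZ)},
    {(PX,PY),(PX,PZ)},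
    {(PX,PY),(PY,PZ),(PZ,PX)},
    {(PX,PY),(PY,PX),(PY,PZ)},
    {(PX,PX),(PX,PY),(PY,PZ)},
    {(PX,PX),(PY,PY),(PY,PZ)},
    {(PX,PX),(PY,PY),(PX,PY)},
    {(PX,PX),(PX,PY),(PX,PZ)},
    {(PX,PY),(PY,PX),(PY,PZ),(PZ,PY)},
    {(PX,PX),(PX,PY),(PZ,PX)},
    {(PX,PX),(PX,PZ),(PY,PY),(PZ,PY)},
    {(PX,PX),(PX,PY),(PZ,PX),(PY,PZ)},
    {(PX,PX),(PY,PY),(PZ,PZ),(PZ,PY)},
    {(PX,PX),(PY,PY),(PX,PY),(PZ,PX)},
    {(PX,PX),(PX,PY),(PX,PZ),(PY,PX)}
  ]"

definition gens :: "nat \<Rightarrow> (pauli \<times> pauli) set" where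
  "gens k = gens_list ! (k - 1)"

end

theory Submission
  imports Defs
begin


fun pm :: "pauli \<Rightarrow> pauli \<Rightarrow> pauli" where
  "pm PI b = b"
| "pm PX PI = PX" | "pm PX PX = PI" | "pm PX PY = PZ" | "pm PX PZ = PY"
| "pm PY PI = PY" | "pm PY PX = PZ" | "pm PY PY = PI" | "pm PY PZ = PX"
| "pm PZ PI = PZ" | "pm PZ PX = PY" | "pm PZ PY = PX" | "pm PZ PZ = PI"

fun ph :: "pauli \<Rightarrow> pauli \<Rightarrow> complex" where
  "ph PX PY = \<i>" | "ph PY PX = - \<i>" | "ph PY PZ = \<i>" | "ph PZ PY = - \<i>"
| "ph PZ PX = \<i>" | "ph PX PZ = - \<i>" | "ph _ _ = 1"

definition sg :: "pauli \<Rightarrow> pauli \<Rightarrow> complex" where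
  "sg a b = (if a \<noteq> PI \<and> b \<noteq> PI \<and> a \<noteq> b then -1 else 1)"

lemma single: "pauli_entry a r False * pauli_entry b False c + pauli_entry a r True * pauli_entry b True c
   = ph a b * pauli_entry (pm a b) r c"
  by (cases a; cases b; cases r; cases c) simp_all

lemma ph_sg: "ph a b = sg a b * ph b a"
  by (cases a; cases b) (simp_all add: sg_def)

lemma pm_comm: "pm a b = pm b a"
  by (cases a; cases b) simp_all

lemma bit_low: "k < 2^m \<Longrightarrow> \<not> bit_of k m"
  by (simp add: bit_of_def)

lemma bit_high: "k < 2^m \<Longrightarrow> bit_of (k + 2^m) m"
  by (simp add: bit_of_def)

lemma bit_shift: assumes "k < 2^m" "j < m" shows "bit_of (k + 2^m) j = bit_of k j"
proof -
  have "(2::nat)^m = 2^j * 2^(m-j)" using assms(2) by (simp add: power_add[symmetric])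
  hence "(k + 2^m) div 2^j = k div 2^j + 2^(m-j)" by simp
  moreover have "even ((2::nat)^(m-j))" using assms(2) by simp
  ultimately show ?thesis by (simp add: bit_of_def)
qed

lemma sum_bits: "(\<Sum>k<2^m. \<Prod>j<m. f j (bit_of k j)) = (\<Prod>j<m. f j False + f j True :: 'a :: comm_semiring_1)"
proof (induction m)
  case 0 then show ?case by simp
next
  case (Suc m)
  have split: "(\<Sum>k<2^Suc m. g k) = (\<Sum>k<2^m. g k) + (\<Sum>k<2^m. g (k + 2^m))" for g :: "nat \<Rightarrow> 'a"
  proof -
    have e: "{..<2^Suc m} = {..<(2::nat)^m} \<union> {2^m..<2^m+2^m}" by auto
    have "(\<Sum>k<2^Suc m. g k) = (\<Sum>k<2^m. g k) + (\<Sum>k\<in>{2^m..<2^m+2^m}. g k)"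
      unfolding e by (rule sum.union_disjoint) auto
    also have "(\<Sum>k\<in>{2^m..<2^m+2^m}. g k) = (\<Sum>k<2^m. g (k + 2^m))"
      by (metis add.commute add_0 atLeast0LessThan sum.shift_bounds_nat_ivl)
    finally show ?thesis .
  qed
  have A: "(\<Sum>k<2^m. \<Prod>j<Suc m. f j (bit_of k j)) = (\<Sum>k<2^m. \<Prod>j<m. f j (bit_of k j)) * f m False"
    by (simp add: sum_distrib_right bit_low)
  have B: "(\<Sum>k<2^m. \<Prod>j<Suc m. f j (bit_of (k + 2^m) j)) = (\<Sum>k<2^m. \<Prod>j<m. f j (bit_of k j)) * f m True"
    apply (simp add: sum_distrib_right bit_high)
    apply (rule sum.cong[OF refl])
    apply (rule arg_cong[where f="\<lambda>x. x * f m True"])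
    apply (rule prod.cong[OF refl])
    by (simp add: bit_shift)
  show ?case unfolding split A B Suc by (simp add: distrib_left)
qed

lemma pauli_carrier: "pauli_mat w \<in> carrier_mat (2^length w) (2^length w)"
  by (simp add: pauli_mat_def)

lemma pauli_index: "r < 2^length w \<Longrightarrow> c < 2^length w \<Longrightarrow>
   pauli_mat w $$ (r,c) = (\<Prod>j<length w. pauli_entry (w ! j) (bit_of r j) (bit_of c j))"
  by (simp add: pauli_mat_def)

lemma pauli_mult: assumes len: "length v = length w"
  shows "pauli_mat w * pauli_mat v = (\<Prod>j<length w. ph (w!j) (v!j)) \<cdot>\<^sub>m pauli_mat (map2 pm w v)"
proof (rule eq_matI)
  let ?m = "length w"
  have lm: "length (map2 pm w v) = ?m" using len by simp
  show "dim_row (pauli_mat w * pauli_mat v) = dim_row ((\<Prod>j<length w. ph (w!j) (v!j)) \<cdot>\<^sub>m pauli_mat (map2 pm w v))"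
    using lm by (simp add: pauli_mat_def)
  show "dim_col (pauli_mat w * pauli_mat v) = dim_col ((\<Prod>j<length w. ph (w!j) (v!j)) \<cdot>\<^sub>m pauli_mat (map2 pm w v))"
    using lm len by (simp add: pauli_mat_def)
  fix r c assume r: "r < dim_row ((\<Prod>j<length w. ph (w!j) (v!j)) \<cdot>\<^sub>m pauli_mat (map2 pm w v))"
    and c: "c < dim_col ((\<Prod>j<length w. ph (w!j) (v!j)) \<cdot>\<^sub>m pauli_mat (map2 pm w v))"
  hence r': "r < 2^?m" and c': "c < 2^?m" using lm by (auto simp: pauli_mat_def)
  have "(pauli_mat w * pauli_mat v) $$ (r,c) = (\<Sum>k<2^?m. pauli_mat w $$ (r,k) * pauli_mat v $$ (k,c))"
    using r' c' len by (simp add: pauli_mat_def scalar_prod_def atLeast0LessThan)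
  also have "\<dots> = (\<Sum>k<2^?m. \<Prod>j<?m. pauli_entry (w ! j) (bit_of r j) (bit_of k j) * pauli_entry (v ! j) (bit_of k j) (bit_of c j))"
    using r' c' len by (simp add: pauli_index prod.distrib)
  also have "\<dots> = (\<Prod>j<?m. pauli_entry (w ! j) (bit_of r j) False * pauli_entry (v ! j) False (bit_of c j)
     + pauli_entry (w ! j) (bit_of r j) True * pauli_entry (v ! j) True (bit_of c j))"
    by (rule sum_bits)
  also have "\<dots> = (\<Prod>j<?m. ph (w!j) (v!j) * pauli_entry (pm (w!j) (v!j)) (bit_of r j) (bit_of c j))"
    by (simp add: single)
  also have "\<dots> = (\<Prod>j<?m. ph (w!j) (v!j)) * pauli_mat (map2 pm w v) $$ (r,c)"
    using r' c' lm len by (simp add: pauli_index prod.distrib)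
  finally show "(pauli_mat w * pauli_mat v) $$ (r,c) = ((\<Prod>j<length w. ph (w!j) (v!j)) \<cdot>\<^sub>m pauli_mat (map2 pm w v)) $$ (r,c)"
    using r' c' lm by (simp add: pauli_mat_def)
qed

lemma pauli_anti: assumes len: "length v = length w" and s: "(\<Prod>j<length w. sg (w!j) (v!j)) = -1"
  shows "pauli_mat w * pauli_mat v = - (pauli_mat v * pauli_mat w)"
proof -
  have e1: "map2 pm w v = map2 pm v w" using len by (auto intro!: nth_equalityI simp: pm_comm)
  have e2: "(\<Prod>j<length w. ph (w!j) (v!j)) = - (\<Prod>j<length w. ph (v!j) (w!j))"
    by (subst ph_sg) (simp add: prod.distrib s)
  show ?thesis unfolding pauli_mult[OF len] pauli_mult[OF len[symmetric]] e1 e2 len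
    by (rule eq_matI) auto
qed

lemma pauli_sq: assumes len: "length v = length w"
  shows "pauli_mat v * (pauli_mat v * pauli_mat w) = pauli_mat w"
proof -
  have c: "pauli_mat v \<in> carrier_mat (2^length w) (2^length w)" "pauli_mat w \<in> carrier_mat (2^length w) (2^length w)"
    using pauli_carrier len by metis+
  have "pauli_mat v * (pauli_mat v * pauli_mat w) = (pauli_mat v * pauli_mat v) * pauli_mat w"
    using c by simp
  also have "pauli_mat v * pauli_mat v = pauli_mat (replicate (length w) PI)"
  proof -
    have p1: "(\<Prod>j<length v. ph (v!j) (v!j)) = 1"
      by (rule prod.neutral) (metis ph.simps pauli.exhaust)
    have "map2 pm v v = replicate (length w) PI" using len
      by (auto intro!: nth_equalityI) (metis pm.simps pauli.exhaust)
    thus ?thesis unfolding pauli_mult[OF refl] p1 by (rule_tac eq_matI) auto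
  qed
  also have "pauli_mat (replicate (length w) PI) * pauli_mat w = pauli_mat w"
  proof -
    have p1: "(\<Prod>j<length w. ph (replicate (length w) PI ! j) (w!j)) = 1"
      by (rule prod.neutral) simp
    have "map2 pm (replicate (length w) PI) w = w" 
      by (auto intro!: nth_equalityI)
    thus ?thesis unfolding pauli_mult[of w "replicate (length w) PI", simplified] p1
      using p1 by (rule_tac eq_matI) auto
  qed
  finally show ?thesis .
qed




lemma two_site_len: "1 \<le> j \<Longrightarrow> j < n \<Longrightarrow> length (two_site n j A B) = n"
  by (simp add: two_site_def)

lemma two_site_nth: assumes "1 \<le> j" "j < n" "i < n"
  shows "two_site n j A B ! i = (if i + 1 = j then A else if i = j then B else PI)"
  using assms unfolding two_site_def
  by (auto simp: nth_append nth_Cons' split: if_splits)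

lemma prod_single: "p < (n::nat) \<Longrightarrow> (\<Prod>i<n. if i = p then x else 1) = (x :: complex)"
  by (subst prod.delta) auto

lemma sg_I1[simp]: "sg PI b = 1" and sg_I2[simp]: "sg a PI = 1"
  by (simp_all add: sg_def)

lemma sg_same: assumes "1 \<le> j" "j < n"
  shows "(\<Prod>i<n. sg (two_site n j A B ! i) (two_site n j C D ! i)) = sg A C * sg B D"
proof -
  have "(\<Prod>i<n. sg (two_site n j A B ! i) (two_site n j C D ! i)) =
     (\<Prod>i<n. (if i = j - 1 then sg A C else 1) * (if i = j then sg B D else 1))"
    using assms by (intro prod.cong refl) (auto simp: two_site_nth)
  also have "\<dots> = sg A C * sg B D" using assms by (simp add: prod.distrib prod.delta[of "{..<n}"])
  finally show ?thesis .
qed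

lemma sg_right: assumes "1 \<le> j" "j + 1 < n"
  shows "(\<Prod>i<n. sg (two_site n j A B ! i) (two_site n (j+1) C D ! i)) = sg B C"
proof -
  have "(\<Prod>i<n. sg (two_site n j A B ! i) (two_site n (j+1) C D ! i)) =
     (\<Prod>i<n. (if i = j then sg B C else 1))"
    using assms by (intro prod.cong refl) (auto simp: two_site_nth)
  also have "\<dots> = sg B C" using assms by (subst prod.delta) auto
  finally show ?thesis .
qed




definition tr :: "complex mat \<Rightarrow> complex" where "tr A = (\<Sum>i<dim_row A. A $$ (i,i))"

definition ahm :: "nat \<Rightarrow> complex mat \<Rightarrow> bool" where
  "ahm N x \<longleftrightarrow> x \<in> carrier_mat N N \<and> (\<forall>i<N. \<forall>k<N. x$$(i,k) = - cnj (x$$(k,i)))"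

lemma ahm_carrier: "ahm N x \<Longrightarrow> x \<in> carrier_mat N N"
  unfolding ahm_def by blast

lemma ahm_entry: "ahm N x \<Longrightarrow> a < N \<Longrightarrow> b < N \<Longrightarrow> x$$(a,b) = - cnj (x$$(b,a))"
  unfolding ahm_def by blast

lemma tr_comm: assumes "A \<in> carrier_mat N N" "B \<in> carrier_mat N N"
  shows "tr (A * B) = tr (B * A)"
proof -
  have "tr (A * B) = (\<Sum>i<N. \<Sum>k<N. A$$(i,k) * B$$(k,i))"
    using assms by (simp add: tr_def scalar_prod_def atLeast0LessThan)
  also have "\<dots> = (\<Sum>k<N. \<Sum>i<N. B$$(k,i) * A$$(i,k))"
    by (subst sum.swap) (simp add: mult.commute)
  also have "\<dots> = tr (B * A)"
    using assms by (simp add: tr_def scalar_prod_def atLeast0LessThan)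
  finally show ?thesis .
qed

lemma tr_add: "A \<in> carrier_mat N N \<Longrightarrow> B \<in> carrier_mat N N \<Longrightarrow> tr (A + B) = tr A + tr B"
  by (simp add: tr_def sum.distrib)

lemma tr_minus: "A \<in> carrier_mat N N \<Longrightarrow> B \<in> carrier_mat N N \<Longrightarrow> tr (A - B) = tr A - tr B"
  by (simp add: tr_def sum_subtractf)

lemma tr_uminus: "A \<in> carrier_mat N N \<Longrightarrow> tr (- A) = - tr A"
  by (simp add: tr_def sum_negf)

lemma tr_smult: "A \<in> carrier_mat N N \<Longrightarrow> tr (c \<cdot>\<^sub>m A) = c * tr A"
  by (simp add: tr_def sum_distrib_left)

lemma closure_carrier: assumes "S \<subseteq> carrier_mat N N" "x \<in> lie_closure N S"
  shows "x \<in> carrier_mat N N"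
  using assms(2) by induction (use assms(1) in auto)

lemma closure_ahm: assumes "\<forall>x\<in>S. ahm N x" "x \<in> lie_closure N S"
  shows "ahm N x"
  using assms(2)
proof induction
  case (gen x) then show ?case using assms(1) by auto
next
  case zero then show ?case by (simp add: ahm_def)
next
  case (add x y)
  have cx: "x \<in> carrier_mat N N" and cy: "y \<in> carrier_mat N N" using add ahm_carrier ahm_entry by metis+
  have ex: "\<And>a b. a < N \<Longrightarrow> b < N \<Longrightarrow> x$$(a,b) = - cnj (x$$(b,a))"
    and ey: "\<And>a b. a < N \<Longrightarrow> b < N \<Longrightarrow> y$$(a,b) = - cnj (y$$(b,a))"
    using add ahm_carrier ahm_entry by metis+
  show ?case unfolding ahm_def
  proof (intro conjI allI impI)
    show "x + y \<in> carrier_mat N N" using cx cy by auto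
    fix i k assume i: "i < N" and k: "k < N"
    show "(x + y) $$ (i,k) = - cnj ((x + y) $$ (k,i))"
      using cx cy i k ex[OF i k] ey[OF i k] by simp
  qed
next
  case (smult x r)
  have cx: "x \<in> carrier_mat N N" using smult ahm_carrier ahm_entry by metis+
  have ex: "\<And>a b. a < N \<Longrightarrow> b < N \<Longrightarrow> x$$(a,b) = - cnj (x$$(b,a))"
    using smult ahm_carrier ahm_entry by metis+
  show ?case unfolding ahm_def
  proof (intro conjI allI impI)
    show "complex_of_real r \<cdot>\<^sub>m x \<in> carrier_mat N N" using cx by auto
    fix i k assume i: "i < N" and k: "k < N"
    show "(complex_of_real r \<cdot>\<^sub>m x) $$ (i,k) = - cnj ((complex_of_real r \<cdot>\<^sub>m x) $$ (k,i))"
      using cx i k ex[OF i k] by simp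
  qed
next
  case (bracket x y)
  have cx: "x \<in> carrier_mat N N" and cy: "y \<in> carrier_mat N N" using bracket ahm_carrier ahm_entry by metis+
  show ?case unfolding ahm_def
  proof (intro conjI allI impI)
    show "x * y - y * x \<in> carrier_mat N N" using cx cy by auto
    fix i k assume i: "i < N" and k: "k < N"
    have ex: "\<And>a b. a < N \<Longrightarrow> b < N \<Longrightarrow> x$$(a,b) = - cnj (x$$(b,a))"
      and ey: "\<And>a b. a < N \<Longrightarrow> b < N \<Longrightarrow> y$$(a,b) = - cnj (y$$(b,a))"
      using bracket ahm_carrier ahm_entry by metis+
    have "(x * y - y * x) $$ (i,k) = (\<Sum>l<N. x$$(i,l) * y$$(l,k)) - (\<Sum>l<N. y$$(i,l) * x$$(l,k))"
      using cx cy i k by (simp add: scalar_prod_def atLeast0LessThan)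
    also have "\<dots> = (\<Sum>l<N. cnj (x$$(l,i)) * cnj (y$$(k,l))) - (\<Sum>l<N. cnj (y$$(l,i)) * cnj (x$$(k,l)))"
    proof (intro arg_cong2[where f="(-)"] sum.cong refl)
      fix l assume "l \<in> {..<N}"
      hence l: "l < N" by simp
      show "x$$(i,l) * y$$(l,k) = cnj (x$$(l,i)) * cnj (y$$(k,l))"
        using ex[OF i l] ey[OF l k] by simp
      show "y$$(i,l) * x$$(l,k) = cnj (y$$(l,i)) * cnj (x$$(k,l))"
        using ey[OF i l] ex[OF l k] by simp
    qed
    also have "\<dots> = - cnj ((\<Sum>l<N. x$$(k,l) * y$$(l,i)) - (\<Sum>l<N. y$$(k,l) * x$$(l,i)))"
      unfolding complex_cnj_diff cnj_sum complex_cnj_mult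
      by (simp add: mult.commute[of "cnj (x $$ _)"])
    also have "(\<Sum>l<N. x$$(k,l) * y$$(l,i)) - (\<Sum>l<N. y$$(k,l) * x$$(l,i)) = (x * y - y * x) $$ (k,i)"
      using cx cy i k by (simp add: scalar_prod_def atLeast0LessThan)
    finally show "(x * y - y * x) $$ (i,k) = - cnj ((x * y - y * x) $$ (k,i))" .
  qed
qed

lemma ahm_zero: assumes "ahm N z" "tr (z * z) = 0" shows "z = 0\<^sub>m N N"
proof -
  have cz: "z \<in> carrier_mat N N" and e: "\<And>a b. a < N \<Longrightarrow> b < N \<Longrightarrow> z$$(a,b) = - cnj (z$$(b,a))"
    using assms(1) ahm_carrier ahm_entry by metis+
  have "tr (z * z) = (\<Sum>i<N. \<Sum>k<N. z$$(i,k) * z$$(k,i))"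
    using cz by (simp add: tr_def scalar_prod_def atLeast0LessThan)
  also have "\<dots> = (\<Sum>i<N. \<Sum>k<N. - complex_of_real ((cmod (z$$(i,k)))^2))"
  proof (intro sum.cong refl)
    fix i k assume "i \<in> {..<N}" "k \<in> {..<N}"
    hence "z$$(k,i) = - cnj (z$$(i,k))" using e[of k i] by simp
    thus "z$$(i,k) * z$$(k,i) = - complex_of_real ((cmod (z$$(i,k)))^2)"
      by (simp add: complex_norm_square[symmetric])
  qed
  also have "\<dots> = - complex_of_real (\<Sum>i<N. \<Sum>k<N. (cmod (z$$(i,k)))^2)"
    by (simp add: sum_negf)
  finally have t: "tr (z * z) = - complex_of_real (\<Sum>i<N. \<Sum>k<N. (cmod (z$$(i,k)))^2)" .
  hence "complex_of_real (\<Sum>i<N. \<Sum>k<N. (cmod (z$$(i,k)))^2) = 0" using assms(2)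
    by (metis neg_0_equal_iff_equal)
  hence "(\<Sum>i<N. \<Sum>k<N. (cmod (z$$(i,k)))^2) = 0" by (simp only: of_real_eq_0_iff)
  hence "\<forall>i<N. \<forall>k<N. (cmod (z$$(i,k)))^2 = 0"
    by (simp add: sum_nonneg_eq_0_iff sum_nonneg)
  thus ?thesis using cz by (intro eq_matI) auto
qed




lemma mat_eq_of_minus: fixes A B :: "complex mat" assumes "A \<in> carrier_mat N N" "B \<in> carrier_mat N N" "A - B = 0\<^sub>m N N"
  shows "A = B"
proof (rule eq_matI)
  fix i j assume "i < dim_row B" "j < dim_col B"
  hence ij: "i < N" "j < N" using assms by auto
  have "(A - B) $$ (i,j) = 0" using assms(3) ij by simp
  moreover have "(A - B) $$ (i,j) = A $$ (i,j) - B $$ (i,j)" using assms(1,2) ij by simp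
  ultimately show "A $$ (i,j) = B $$ (i,j)" by simp
qed (use assms in auto)

lemma center_abstract:
  fixes S :: "complex mat set"
  assumes carr: "S \<subseteq> carrier_mat N N" and ah: "\<forall>x\<in>S. ahm N x"
  and part: "\<forall>x\<in>S. \<exists>q\<in>S. q*(q*x) = -x \<and> x*q = -(q*x)"
  shows "lie_center (lie_closure N S) = {0\<^sub>m N N}"
proof
  show "{0\<^sub>m N N} \<subseteq> lie_center (lie_closure N S)"
  proof
    fix z :: "complex mat" assume "z \<in> {0\<^sub>m N N}"
    hence z: "z = 0\<^sub>m N N" by simp
    have "\<forall>y \<in> lie_closure N S. z * y - y * z = 0\<^sub>m (dim_row z) (dim_col z)"
    proof
      fix y assume "y \<in> lie_closure N S"
      hence cy: "y \<in> carrier_mat N N" using closure_carrier[OF carr] by blast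
      show "z * y - y * z = 0\<^sub>m (dim_row z) (dim_col z)"
        unfolding z using cy by (simp add: left_mult_zero_mat[OF cy] right_mult_zero_mat[OF cy])
    qed
    thus "z \<in> lie_center (lie_closure N S)"
      unfolding lie_center_def using z lie_closure.zero[of N S] by blast
  qed
next
  show "lie_center (lie_closure N S) \<subseteq> {0\<^sub>m N N}"
  proof
    fix z assume "z \<in> lie_center (lie_closure N S)"
    hence zL: "z \<in> lie_closure N S" and comm0: "\<forall>y \<in> lie_closure N S. z * y - y * z = 0\<^sub>m (dim_row z) (dim_col z)"
      unfolding lie_center_def by auto
    have cz: "z \<in> carrier_mat N N" using closure_carrier[OF carr zL] .
    have comm: "z * y = y * z" if "y \<in> lie_closure N S" for y
    proof -
      have cy: "y \<in> carrier_mat N N" using closure_carrier[OF carr that] .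
      have "z*y - y*z = 0\<^sub>m N N" using comm0 that cz by auto
      from mat_eq_of_minus[OF mult_carrier_mat[OF cz cy] mult_carrier_mat[OF cy cz] this] show ?thesis .
    qed
    have "tr (z * x) = 0" if "x \<in> lie_closure N S" for x
      using that
    proof (induction rule: lie_closure.induct)
      case (gen x)
      obtain q where qS: "q \<in> S" and h1: "q*(q*x) = -x" and h2: "x*q = -(q*x)" using part gen by blast
      have cx: "x \<in> carrier_mat N N" and cq: "q \<in> carrier_mat N N" using carr gen qS by auto
      have zq: "z * q = q * z" using comm lie_closure.gen[OF qS] by blast
      have xq: "(q*x)*q = x"
      proof -
        have "(q*x)*q = q*(x*q)" using cq cx by simp
        also have "\<dots> = -(q*(q*x))" unfolding h2 using cq cx by (intro uminus_mult_right_mat) simp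
        also have "\<dots> = x" unfolding h1 by simp
        finally show ?thesis .
      qed
      have t1: "tr (z*(q*(q*x))) = - tr (z*x)" unfolding h1 using cz cx by (simp add: tr_uminus[of _ N])
      have t2: "z*(q*(q*x)) = (q*z)*(q*x)"
      proof -
        have "z*(q*(q*x)) = (z*q)*(q*x)" using assoc_mult_mat[OF cz cq mult_carrier_mat[OF cq cx]] by simp
        thus ?thesis unfolding zq .
      qed
      have t3: "tr ((q*z)*(q*x)) = tr ((q*x)*(q*z))"
        using cz cq cx by (intro tr_comm[of _ N]) auto
      have t4: "(q*x)*(q*z) = x*z"
      proof -
        have "(q*x)*(q*z) = ((q*x)*q)*z" using assoc_mult_mat[OF mult_carrier_mat[OF cq cx] cq cz] by simp
        thus ?thesis unfolding xq .
      qed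
      have t5: "tr (x * z) = tr (z * x)" using cx cz by (rule tr_comm)
      have "- tr (z*x) = tr (z*x)" using t1 unfolding t2 t3 t4 t5 by simp
      thus ?case by simp
    next
      case zero
      show ?case using cz by (simp add: right_mult_zero_mat tr_def)
    next
      case (add x y)
      have cx: "x \<in> carrier_mat N N" and cy: "y \<in> carrier_mat N N"
        using add closure_carrier[OF carr] by blast+
      have "z * (x + y) = z * x + z * y" using cz cx cy by (simp add: mult_add_distrib_mat)
      thus ?case using add cx cy cz by (simp add: tr_add[of _ N])
    next
      case (smult x r)
      have cx: "x \<in> carrier_mat N N" using smult closure_carrier[OF carr] by blast
      have "z * (complex_of_real r \<cdot>\<^sub>m x) = complex_of_real r \<cdot>\<^sub>m (z * x)" using cz cx by (simp add: mult_smult_distrib)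
      thus ?case using smult cx cz by (simp add: tr_smult[of _ N])
    next
      case (bracket x y)
      have cx: "x \<in> carrier_mat N N" and cy: "y \<in> carrier_mat N N"
        using bracket closure_carrier[OF carr] by blast+
      have zx: "z * x = x * z" using comm bracket by blast
      have e1: "z * (x * y - y * x) = z * (x * y) - z * (y * x)" using cz cx cy
        by (intro mult_minus_distrib_mat) auto
      have "tr (z * (y * x)) = tr ((z * y) * x)" using assoc_mult_mat[OF cz cy cx] by simp
      also have "\<dots> = tr (x * (z * y))" using cz cx cy by (intro tr_comm[of _ N]) auto
      also have "\<dots> = tr ((x * z) * y)" using assoc_mult_mat[OF cx cz cy] by simp
      also have "\<dots> = tr (z * (x * y))" unfolding zx[symmetric] using assoc_mult_mat[OF cz cx cy] by simp
      finally have "tr (z * (y * x)) = tr (z * (x * y))" .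
      thus ?case unfolding e1 using cz cx cy by (simp add: tr_minus[of _ N])
    qed
    hence "tr (z * z) = 0" using zL by blast
    hence "z = 0\<^sub>m N N" using ahm_zero[OF closure_ahm[OF ah zL]] by blast
    thus "z \<in> {0\<^sub>m N N}" by simp
  qed
qed




definition cond :: "(pauli \<times> pauli) set \<Rightarrow> bool" where
  "cond G \<longleftrightarrow> (\<forall>(A,B)\<in>G. (\<exists>(C,D)\<in>G. sg A C * sg B D = -1) \<or>
      ((\<exists>(C,D)\<in>G. sg B C = -1) \<and> (\<exists>(C,D)\<in>G. sg A D = -1)))"

lemma cond_all: "list_all cond gens_list"
  by (simp add: gens_list_def cond_def sg_def)

lemma cond_gens: "1 \<le> k \<Longrightarrow> k \<le> 22 \<Longrightarrow> cond (gens k)"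
  using cond_all unfolding gens_def list_all_length
  by (simp add: gens_list_def)




lemma pauli_entry_cnj: "cnj (pauli_entry p c r) = pauli_entry p r c"
  by (cases p; cases r; cases c) simp_all

lemma pauli_herm: "a < 2^length w \<Longrightarrow> b < 2^length w \<Longrightarrow> cnj (pauli_mat w $$ (b,a)) = pauli_mat w $$ (a,b)"
  by (simp add: pauli_index pauli_entry_cnj)

lemma gen_ahm: "ahm (2^length w) (\<i> \<cdot>\<^sub>m pauli_mat w)"
  unfolding ahm_def
proof (intro conjI allI impI)
  show "\<i> \<cdot>\<^sub>m pauli_mat w \<in> carrier_mat (2 ^ length w) (2 ^ length w)" using pauli_carrier by auto
  fix a b :: nat assume a: "a < 2^length w" and b: "b < 2^length w"
  show "(\<i> \<cdot>\<^sub>m pauli_mat w) $$ (a, b) = - cnj ((\<i> \<cdot>\<^sub>m pauli_mat w) $$ (b, a))"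
    using a b pauli_carrier[of w] pauli_herm[OF a b] by simp
qed

lemma smult_mult_smult: "A \<in> carrier_mat N N \<Longrightarrow> B \<in> carrier_mat N N \<Longrightarrow>
   (c \<cdot>\<^sub>m A) * (d \<cdot>\<^sub>m B) = (c*d :: complex) \<cdot>\<^sub>m (A*B)"
  by (rule eq_matI) (auto simp: scalar_prod_def sum_distrib_left ac_simps)

lemma uminus_smult: "-(c \<cdot>\<^sub>m A) = (-c :: complex) \<cdot>\<^sub>m A" by (rule eq_matI) auto
lemma smult_uminus: "c \<cdot>\<^sub>m (- A) = - (c \<cdot>\<^sub>m (A :: complex mat))" by (rule eq_matI) auto

lemma partner_mat: assumes cv: "Pv \<in> carrier_mat N N" and cw: "Pw \<in> carrier_mat N N"
  and sq: "Pv*(Pv*Pw) = Pw" and an: "Pw*Pv = -(Pv*Pw)"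
  shows "(\<i> \<cdot>\<^sub>m Pv)*((\<i> \<cdot>\<^sub>m Pv)*(\<i> \<cdot>\<^sub>m Pw)) = -(\<i> \<cdot>\<^sub>m Pw) \<and>
         (\<i> \<cdot>\<^sub>m Pw)*(\<i> \<cdot>\<^sub>m Pv) = -((\<i> \<cdot>\<^sub>m Pv)*(\<i> \<cdot>\<^sub>m Pw))"
proof
  have e: "(\<i> \<cdot>\<^sub>m Pv)*(\<i> \<cdot>\<^sub>m Pw) = (\<i>*\<i>) \<cdot>\<^sub>m (Pv*Pw)" by (rule smult_mult_smult[OF cv cw])
  have "(\<i> \<cdot>\<^sub>m Pv)*((\<i>*\<i>) \<cdot>\<^sub>m (Pv*Pw)) = (\<i>*(\<i>*\<i>)) \<cdot>\<^sub>m (Pv*(Pv*Pw))"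
    using cv cw by (intro smult_mult_smult[of _ N]) auto
  also have "\<dots> = -(\<i> \<cdot>\<^sub>m Pw)" unfolding sq uminus_smult by simp
  finally show "(\<i> \<cdot>\<^sub>m Pv)*((\<i> \<cdot>\<^sub>m Pv)*(\<i> \<cdot>\<^sub>m Pw)) = -(\<i> \<cdot>\<^sub>m Pw)" unfolding e .
  have "(\<i> \<cdot>\<^sub>m Pw)*(\<i> \<cdot>\<^sub>m Pv) = (\<i>*\<i>) \<cdot>\<^sub>m (Pw*Pv)" by (rule smult_mult_smult[OF cw cv])
  also have "\<dots> = -((\<i>*\<i>) \<cdot>\<^sub>m (Pv*Pw))" unfolding an smult_uminus ..
  finally show "(\<i> \<cdot>\<^sub>m Pw)*(\<i> \<cdot>\<^sub>m Pv) = -((\<i> \<cdot>\<^sub>m Pv)*(\<i> \<cdot>\<^sub>m Pw))" unfolding e .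
qed

lemma sg_comm: "sg a b = sg b a" by (auto simp: sg_def)

lemma partner: assumes c: "cond G" and AB: "(A,B)\<in>G" and j: "1\<le>j" "j\<le>n-1" and n: "3\<le>n"
  shows "\<exists>j' C D. (C,D)\<in>G \<and> 1\<le>j' \<and> j' \<le> n-1 \<and>
     (\<Prod>i<n. sg (two_site n j A B ! i) (two_site n j' C D ! i)) = -1"
proof -
  have "(\<exists>(C,D)\<in>G. sg A C * sg B D = -1) \<or> ((\<exists>(C,D)\<in>G. sg B C = -1) \<and> (\<exists>(C,D)\<in>G. sg A D = -1))"
    using c AB unfolding cond_def by blast
  thus ?thesis
  proof
    assume "\<exists>(C,D)\<in>G. sg A C * sg B D = -1"
    then obtain C D where "(C,D)\<in>G" "sg A C * sg B D = -1" by blast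
    moreover have "j < n" using j n by simp
    ultimately show ?thesis using j sg_same[of j n A B C D] by metis
  next
    assume h: "(\<exists>(C,D)\<in>G. sg B C = -1) \<and> (\<exists>(C,D)\<in>G. sg A D = -1)"
    show ?thesis
    proof (cases "j + 1 < n")
      case True
      from h obtain C D where "(C,D)\<in>G" "sg B C = -1" by blast
      moreover have "1 \<le> j+1" "j+1 \<le> n-1" using True by auto
      ultimately show ?thesis using j True sg_right[of j n A B C D] by metis
    next
      case False
      from h obtain C D where CD: "(C,D)\<in>G" "sg A D = -1" by blast
      have jj: "j = (j-1) + 1" "1 \<le> j-1" "(j-1)+1 < n" "j - 1 \<le> n - 1" using False j n by auto
      have "(\<Prod>i<n. sg (two_site n j A B ! i) (two_site n (j-1) C D ! i)) =
            (\<Prod>i<n. sg (two_site n (j-1) C D ! i) (two_site n ((j-1)+1) A B ! i))"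
        using jj(1) sg_comm by metis
      also have "\<dots> = sg D A" using sg_right[OF jj(2,3)] .
      also have "\<dots> = -1" using CD sg_comm by metis
      finally show ?thesis using CD jj by blast
    qed
  qed
qed

theorem mainTheorem7:
  fixes k n :: nat
  assumes "1 \<le> k" and "k \<le> 22" and "3 \<le> n"
  shows "lie_center (G_alg (gens k) n) = {0\<^sub>m (2 ^ n) (2 ^ n)}"
proof -
  define T where "T = {two_site n j A B | j A B. (A, B) \<in> gens k \<and> 1 \<le> j \<and> j \<le> n - 1}"
  define S where "S = (\<lambda>P. \<i> \<cdot>\<^sub>m pauli_mat P) ` T"
  have lenT: "length w = n" if "w \<in> T" for w
    using that assms(3) unfolding T_def by (auto intro!: two_site_len)
  have G: "G_alg (gens k) n = lie_closure (2^n) S" by (simp add: G_alg_def Lie_gen_def S_def T_def)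
  have cg: "cond (gens k)" using cond_gens assms by blast
  show ?thesis unfolding G
  proof (rule center_abstract)
    show "S \<subseteq> carrier_mat (2^n) (2^n)" unfolding S_def using lenT pauli_carrier by fastforce
    show "\<forall>x\<in>S. ahm (2^n) x" unfolding S_def using lenT gen_ahm by fastforce
    show "\<forall>x\<in>S. \<exists>q\<in>S. q*(q*x) = -x \<and> x*q = -(q*x)"
    proof
      fix x assume "x \<in> S"
      then obtain j A B where AB: "(A,B)\<in>gens k" "1\<le>j" "j\<le>n-1" and x: "x = \<i> \<cdot>\<^sub>m pauli_mat (two_site n j A B)"
        unfolding S_def T_def by blast
      obtain j' C D where CD: "(C,D)\<in>gens k" "1\<le>j'" "j'\<le>n-1"
        and s: "(\<Prod>i<n. sg (two_site n j A B ! i) (two_site n j' C D ! i)) = -1"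
        using partner[OF cg AB assms(3)] by blast
      let ?w = "two_site n j A B" and ?v = "two_site n j' C D"
      have wT: "?w \<in> T" and vT: "?v \<in> T" unfolding T_def using AB CD by blast+
      have lw: "length ?w = n" and lv: "length ?v = n" using lenT wT vT by auto
      have cw: "pauli_mat ?w \<in> carrier_mat (2^n) (2^n)" and cv: "pauli_mat ?v \<in> carrier_mat (2^n) (2^n)"
        using pauli_carrier lw lv by metis+
      have sq: "pauli_mat ?v * (pauli_mat ?v * pauli_mat ?w) = pauli_mat ?w"
        using pauli_sq lw lv by simp
      have an: "pauli_mat ?w * pauli_mat ?v = - (pauli_mat ?v * pauli_mat ?w)"
        using pauli_anti[of ?v ?w] lw lv s by simp
      have "\<i> \<cdot>\<^sub>m pauli_mat ?v \<in> S" unfolding S_def using vT by blast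
      thus "\<exists>q\<in>S. q*(q*x) = -x \<and> x*q = -(q*x)" unfolding x
        using partner_mat[OF cv cw sq an] by blast
    qed
  qed
qed


end
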